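(* Let $n \geq 2$ be a natural number. The following conditions are equivalent: (a) $\lfloor \sqrt{2}\,n \rfloor$ is even. (b) $\left\{ \frac{n}{\sqrt{2}} \right\} \leq \frac{1}{2}$. (c) $\left\{ \frac{n}{\sqrt{2}} \right\} < \frac{1}{2}$. (d) $\left\lfloor \sqrt{2}\,n \left\lfloor \frac{n}{\sqrt{2}} \right\rfloor \right\rfloor = \left\lfloor \frac{n}{\sqrt{2}} \lfloor \sqrt{2}\,n \rfloor \right\rfloor$. (e) $\left\lfloor \frac{n}{\sqrt{2}} \right\rfloor = \left\lfloor \sqrt{ n^2 - \left\lfloor \frac{n}{\sqrt{2}} \right\rfloor^2 } \right\rfloor$. (f) $\left\{ \frac{n}{\sqrt{2}} \right\} < \sqrt{ \left\lfloor \frac{n}{\sqrt{2}} \right\rfloor^2 + \left\lfloor \frac{n}{\sqrt{2}} \right\rfloor + \frac{1}{2} } - \left\lfloor \frac{n}{\sqrt{2}} \right\rfloor$.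
   Context: $\lfloor x \rfloor$ denotes the floor of a real number $x$ and $\{x\} = x - \lfloor x \rfloor$ denotes its fractional part. *)

theory Defs
  imports Complex_Main
begin

end

theory Submission
  imports Defs
begin

theorem theorem1:
  fixes n :: nat
  assumes "n \<ge> 2"
  defines "A \<equiv> even \<lfloor>sqrt 2 * real n\<rfloor>"
    and "B \<equiv> frac (real n / sqrt 2) \<le> 1/2"
    and "C \<equiv> frac (real n / sqrt 2) < 1/2"
    and "D \<equiv> \<lfloor>sqrt 2 * real n * of_int \<lfloor>real n / sqrt 2\<rfloor>\<rfloor>
              = \<lfloor>real n / sqrt 2 * of_int \<lfloor>sqrt 2 * real n\<rfloor>\<rfloor>"
    and "E \<equiv> \<lfloor>real n / sqrt 2\<rfloor>
              = \<lfloor>sqrt ((real n)\<^sup>2 - (of_int \<lfloor>real n / sqrt 2\<rfloor>)\<^sup>2)\<rfloor>"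
    and "F \<equiv> frac (real n / sqrt 2)
              < sqrt ((of_int \<lfloor>real n / sqrt 2\<rfloor>)\<^sup>2 + of_int \<lfloor>real n / sqrt 2\<rfloor> + 1/2)
                - of_int \<lfloor>real n / sqrt 2\<rfloor>"
  shows "(A \<longleftrightarrow> B) \<and> (A \<longleftrightarrow> C) \<and> (A \<longleftrightarrow> D) \<and> (A \<longleftrightarrow> E) \<and> (A \<longleftrightarrow> F)"
proof -
  define x where "x = real n / sqrt 2"
  define m where "m = \<lfloor>x\<rfloor>"
  have s2: "sqrt 2 * sqrt 2 = (2::real)" by simp
  have s2p: "sqrt 2 > (0::real)" by simp
  have x2: "sqrt 2 * real n = 2 * x" unfolding x_def using s2 s2p
    by (simp add: field_simps)
  have xsq: "x^2 = (real n)^2 / 2" unfolding x_def using s2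
    by (simp add: power2_eq_square field_simps)
  have sq2le: "sqrt 2 \<le> (2::real)"
  proof -
    have "sqrt 2 \<le> sqrt ((2::real)^2)" by (rule real_sqrt_le_mono) simp
    thus ?thesis by simp
  qed
  have xgt1: "x \<ge> 1" using assms sq2le s2p unfolding x_def by (simp add: field_simps)
  have mle: "of_int m \<le> x" "x < of_int m + 1" unfolding m_def by linarith+
  have m0: "m \<ge> 0" using xgt1 unfolding m_def by linarith
  have fr: "frac x = x - of_int m" unfolding m_def frac_def by simp
  have nhalf: "x \<noteq> of_int m + 1/2"
  proof
    assume h: "x = of_int m + 1/2"
    hence "(real n)^2 = 2 * (of_int m + 1/2)^2" using xsq by simp
    hence "real (n^2) = real_of_int (2*m^2 + 2*m) + 1/2"
      by (simp add: power2_eq_square algebra_simps)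
    hence "real_of_int (int (n^2) - (2*m^2 + 2*m)) = 1/2" by simp
    then obtain k :: int where "real_of_int k = 1/2" by blast
    hence "real_of_int (2*k) = 1" by simp
    hence "2*k = 1" using of_int_eq_1_iff by blast
    thus False by presburger
  qed
  have fl2: "\<lfloor>2*x\<rfloor> = 2*m + (if x < of_int m + 1/2 then 0 else 1)"
    using mle by (auto intro!: floor_unique)
  have AC: "A \<longleftrightarrow> x < of_int m + 1/2"
    unfolding A_def x2 fl2 by auto
  have BC: "B \<longleftrightarrow> x < of_int m + 1/2"
    unfolding B_def x_def[symmetric] fr using nhalf by auto
  have CC: "C \<longleftrightarrow> x < of_int m + 1/2"
    unfolding C_def x_def[symmetric] fr by auto
  have DC: "D \<longleftrightarrow> x < of_int m + 1/2"
  proof (cases "x < of_int m + 1/2")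
    case True
    then show ?thesis unfolding D_def x2 x_def[symmetric] m_def[symmetric] fl2
      by (simp add: algebra_simps)
  next
    case False
    have "\<lfloor>2 * x * of_int m\<rfloor> < \<lfloor>x * of_int (2*m+1)\<rfloor>"
    proof -
      have "x * of_int (2*m+1) = 2 * x * of_int m + x" by (simp add: algebra_simps)
      thus ?thesis using xgt1 by linarith
    qed
    then show ?thesis using False unfolding D_def x2 x_def[symmetric] m_def[symmetric] fl2
      by simp
  qed
  have EF: "E \<longleftrightarrow> x^2 < (of_int m)^2 + of_int m + 1/2"
  proof -
    have a: "(real n)^2 - (of_int m)^2 \<ge> (of_int m)^2"
    proof -
      have "(of_int m)^2 \<le> x^2" using mle m0 by (intro power_mono) auto
      thus ?thesis using xsq by linarith
    qed
    have b: "sqrt ((real n)^2 - (of_int m)^2) \<ge> of_int m"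
      using a m0 by (meson of_int_0_le_iff real_le_rsqrt)
    have "E \<longleftrightarrow> sqrt ((real n)^2 - (of_int m)^2) < of_int m + 1"
      unfolding E_def x_def[symmetric] m_def[symmetric] using b
      by (metis floor_eq_iff)
    also have "\<dots> \<longleftrightarrow> (real n)^2 - (of_int m)^2 < (of_int m + 1)^2"
      using a m0 by (smt (verit) of_int_nonneg real_less_lsqrt real_sqrt_less_mono real_sqrt_unique real_sqrt_ge_zero)
    also have "\<dots> \<longleftrightarrow> x^2 < (of_int m)^2 + of_int m + 1/2"
    proof -
      have e: "(real n)^2 = 2*x^2" using xsq by simp
      show ?thesis unfolding e power2_sum by simp linarith
    qed
    finally show ?thesis .
  qed
  have FF: "F \<longleftrightarrow> x^2 < (of_int m)^2 + of_int m + 1/2"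
  proof -
    have "F \<longleftrightarrow> x < sqrt ((of_int m)^2 + of_int m + 1/2)"
      unfolding F_def x_def[symmetric] m_def[symmetric] fr by auto
    also have "\<dots> \<longleftrightarrow> x^2 < (of_int m)^2 + of_int m + 1/2"
      using xgt1 m0 by (smt (verit) of_int_nonneg real_less_rsqrt real_sqrt_less_iff real_sqrt_pow2_iff zero_le_power2 real_sqrt_abs power2_eq_square)
    finally show ?thesis .
  qed
  have key: "x^2 < (of_int m)^2 + of_int m + 1/2 \<longleftrightarrow> x < of_int m + 1/2"
  proof
    assume h: "x < of_int m + 1/2"
    have "x^2 < (of_int m + 1/2)^2" using h xgt1 by (simp add: power_strict_mono)
    thus "x^2 < (of_int m)^2 + of_int m + 1/2" by (simp add: power2_eq_square algebra_simps)
  next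
    assume h: "x^2 < (of_int m)^2 + of_int m + 1/2"
    show "x < of_int m + 1/2"
    proof (rule ccontr)
      assume "\<not> ?thesis"
      hence "x \<ge> of_int m + 1/2" by simp
      hence "x^2 \<ge> (of_int m + 1/2)^2" using m0 by (simp add: power_mono)
      hence "(real n)^2 \<ge> 2*(of_int m)^2 + 2*of_int m + 1/2" "(real n)^2 < 2*(of_int m)^2 + 2*of_int m + 1"
        using h xsq by (simp_all add: power2_eq_square algebra_simps)
      hence "real_of_int (int (n^2)) \<ge> real_of_int (2*m^2+2*m) + 1/2"
            "real_of_int (int (n^2)) < real_of_int (2*m^2+2*m) + 1" by simp_all
      hence a: "real_of_int (2*m^2+2*m) < real_of_int (int (n^2))"
        and b: "real_of_int (int (n^2)) < real_of_int (2*m^2+2*m+1)" by simp_all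
      have "2*m^2+2*m < int (n^2)" using a of_int_less_iff by blast
      moreover have "int (n^2) < 2*m^2+2*m+1" using b of_int_less_iff by blast
      ultimately show False by linarith
    qed
  qed
  show ?thesis using AC BC CC DC EF FF key by blast
qed

end
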